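(* There exist $p,k,E$ and source covariance matrices $\Sigma_1,\dots,\Sigma_E$ such that every matrix $V^{\mathrm{seq}}=[v_1,\dots,v_k]$ produced by the sequential procedure $v_1\in\arg\max_{\|v\|=1}\min_{e\in\mathcal{E}}\mathcal{L}_{\mathrm{normVar}}(v;\Sigma_e)$, and for $2\le j\le k$, $v_j\in\arg\max\{\min_{e}\mathcal{L}_{\mathrm{normVar}}([v_1,\dots,v_{j-1},v];\Sigma_e): \|v\|=1,\ v\perp v_i\ \forall i<j\}$, fails to solve rank-$k$ norm-minPCA.
   Context: $\mathcal{O}_{p\times k}=\{V\in\mathbb{R}^{p\times k}:V^\top V=I_k\}$; source domains $\mathcal{E}=\{1,\dots,E\}$ with symmetric positive semidefinite covariances $\Sigma_e$ of positive trace. $\mathcal{L}_{\mathrm{normVar}}(V;\Sigma)=\operatorname{Tr}(V^\top\Sigma V)/\operatorname{Tr}(\Sigma)$. $V^*$ solves rank-$k$ norm-minPCA if $V^*\in\arg\max_{V\in\mathcal{O}_{p\times k}}\min_{e\in\mathcal{E}}\mathcal{L}_{\mathrm{normVar}}(V;\Sigma_e)$. *)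

theory Defs
  imports "Jordan_Normal_Form.Matrix"
begin

definition mtrace :: "real mat \<Rightarrow> real" where
  "mtrace A = (\<Sum>i<dim_row A. A $$ (i, i))"

definition sym_psd :: "nat \<Rightarrow> real mat \<Rightarrow> bool" where
  "sym_psd p S \<longleftrightarrow> S \<in> carrier_mat p p \<and> transpose_mat S = S \<and>
     (\<forall>x \<in> carrier_vec p. 0 \<le> x \<bullet> (S *\<^sub>v x))"

definition stiefel :: "nat \<Rightarrow> nat \<Rightarrow> real mat set" where
  "stiefel p k = {V \<in> carrier_mat p k. transpose_mat V * V = 1\<^sub>m k}"

definition normVar :: "real mat \<Rightarrow> real mat \<Rightarrow> real" where
  "normVar V S = mtrace (transpose_mat V * S * V) / mtrace S"

definition minNormVar :: "nat \<Rightarrow> (nat \<Rightarrow> real mat) \<Rightarrow> real mat \<Rightarrow> real" where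
  "minNormVar E Sig V = Min ((\<lambda>e. normVar V (Sig e)) ` {1..E})"

definition normMinPCA_sol :: "nat \<Rightarrow> nat \<Rightarrow> nat \<Rightarrow> (nat \<Rightarrow> real mat) \<Rightarrow> real mat \<Rightarrow> bool" where
  "normMinPCA_sol p k E Sig V \<longleftrightarrow> V \<in> stiefel p k \<and>
     (\<forall>W \<in> stiefel p k. minNormVar E Sig W \<le> minNormVar E Sig V)"

text \<open>V = [v_1,...,v_k] (columns col V 0, ..., col V (k-1)) is produced by the
  sequential procedure: for each j < k, column j (i.e. v_{j+1}) is a unit vector
  orthogonal to the previous columns that maximises the worst-case objective of
  [v_1,...,v_j, v] among all such unit vectors v. (For j = 0 this is
  v_1 in argmax over unit vectors of the objective of the p x 1 matrix [v].)\<close>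
definition seq_feasible :: "nat \<Rightarrow> real mat \<Rightarrow> nat \<Rightarrow> real vec \<Rightarrow> bool" where
  "seq_feasible p V j v \<longleftrightarrow> v \<in> carrier_vec p \<and> v \<bullet> v = 1 \<and>
     (\<forall>i<j. v \<bullet> col V i = 0)"

definition seq_solution :: "nat \<Rightarrow> nat \<Rightarrow> nat \<Rightarrow> (nat \<Rightarrow> real mat) \<Rightarrow> real mat \<Rightarrow> bool" where
  "seq_solution p k E Sig V \<longleftrightarrow> V \<in> carrier_mat p k \<and>
     (\<forall>j<k. seq_feasible p V j (col V j) \<and>
        (\<forall>v. seq_feasible p V j v \<longrightarrow>
           minNormVar E Sig (mat_of_cols p (map (col V) [0..<j] @ [v]))
             \<le> minNormVar E Sig (mat_of_cols p (map (col V) [0..<Suc j]))))"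

end

theory Submission
  imports Defs
begin

definition S1 :: "real mat" where
  "S1 = mat 3 3 (\<lambda>(i,j). [[20,5,0],[5,14,0],[0,0,16::real]] ! i ! j)"
definition S2 :: "real mat" where
  "S2 = mat 3 3 (\<lambda>(i,j). [[20,-5,0],[-5,11,0],[0,0,19::real]] ! i ! j)"
definition Sg :: "nat \<Rightarrow> real mat" where
  "Sg e = (if e = 1 then S1 else S2)"

lemma sum3: "(\<Sum>i<(3::nat). f i) = f 0 + f 1 + (f 2 :: real)"
  by (simp add: numeral_3_eq_3 numeral_2_eq_2)
lemma sum3': "(\<Sum>i\<in>{0..<(3::nat)}. f i) = f 0 + f 1 + (f 2 :: real)"
  by (simp add: numeral_3_eq_3 numeral_2_eq_2)

lemma S1_carrier: "S1 \<in> carrier_mat 3 3" by (simp add: S1_def)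
lemma S2_carrier: "S2 \<in> carrier_mat 3 3" by (simp add: S2_def)

lemma dot3: "x \<in> carrier_vec 3 \<Longrightarrow> y \<in> carrier_vec 3 \<Longrightarrow>
   x \<bullet> y = x$0 * y$0 + x$1 * y$1 + x$2 * y$2"
  by (simp add: scalar_prod_def numeral_3_eq_3 numeral_2_eq_2)

lemma quad1: "x \<in> carrier_vec 3 \<Longrightarrow>
   x \<bullet> (S1 *\<^sub>v x) = 20*(x$0)^2 + 10*(x$0)*(x$1) + 14*(x$1)^2 + 16*(x$2)^2"
  by (simp add: scalar_prod_def sum3' S1_def row_def power2_eq_square algebra_simps)

lemma quad2: "x \<in> carrier_vec 3 \<Longrightarrow>
   x \<bullet> (S2 *\<^sub>v x) = 20*(x$0)^2 - 10*(x$0)*(x$1) + 11*(x$1)^2 + 19*(x$2)^2"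
  by (simp add: scalar_prod_def sum3' S2_def row_def power2_eq_square algebra_simps)

lemma tr1: "mtrace S1 = 50" by (simp add: mtrace_def S1_def sum3)
lemma tr2: "mtrace S2 = 50" by (simp add: mtrace_def S2_def sum3)

lemma trace_form:
  assumes V: "V \<in> carrier_mat p k" and S: "S \<in> carrier_mat p p"
  shows "mtrace (transpose_mat V * S * V) = (\<Sum>j<k. col V j \<bullet> (S *\<^sub>v col V j))"
proof -
  have e: "transpose_mat V * S * V = transpose_mat V * (S * V)"
    using V S by (intro assoc_mult_mat) auto
  show ?thesis unfolding mtrace_def e
    using V S by (intro sum.cong) (auto simp: mult_mat_vec_def)
qed

lemma minNV2: "minNormVar 2 Sg V = min (normVar V S1) (normVar V S2)"
proof -
  have "{1..2::nat} = {1,2}" by auto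
  then show ?thesis unfolding minNormVar_def by (simp add: Sg_def)
qed

lemma nv1: "x \<in> carrier_vec 3 \<Longrightarrow> S \<in> carrier_mat 3 3 \<Longrightarrow>
  normVar (mat_of_cols 3 [x]) S = (x \<bullet> (S *\<^sub>v x)) / mtrace S"
  unfolding normVar_def
  by (subst trace_form[where p=3 and k=1]) auto

lemma nv2: "V \<in> carrier_mat 3 2 \<Longrightarrow> S \<in> carrier_mat 3 3 \<Longrightarrow>
  normVar V S = (col V 0 \<bullet> (S *\<^sub>v col V 0) + col V 1 \<bullet> (S *\<^sub>v col V 1)) / mtrace S"
  unfolding normVar_def
  by (subst trace_form[where p=3 and k=2]) (auto simp: numeral_2_eq_2)

definition Wc1 :: "real vec" where "Wc1 = vec 3 (\<lambda>i. if i = 0 then 40/41 else if i = 1 then 9/41 else 0)"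
definition Wc2 :: "real vec" where "Wc2 = vec 3 (\<lambda>i. if i = 2 then 1 else 0)"
definition Wm :: "real mat" where "Wm = mat_of_cols 3 [Wc1, Wc2]"

lemma Wm_carrier: "Wm \<in> carrier_mat 3 2"
  unfolding Wm_def using mat_of_cols_carrier(1)[of 3 "[Wc1,Wc2]"] by (simp add: numeral_2_eq_2)
lemma Wm_cols: "col Wm 0 = Wc1" "col Wm 1 = Wc2" "col Wm (Suc 0) = Wc2"
proof -
  have c: "Wc1 \<in> carrier_vec 3" "Wc2 \<in> carrier_vec 3" by (simp_all add: Wc1_def Wc2_def)
  show "col Wm 0 = Wc1" unfolding Wm_def using c by (subst col_mat_of_cols) auto
  show "col Wm 1 = Wc2" unfolding Wm_def using c by (subst col_mat_of_cols) auto
  then show "col Wm (Suc 0) = Wc2" by simp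
qed

lemma Wm_stiefel: "Wm \<in> stiefel 3 2"
  unfolding stiefel_def
proof (intro CollectI conjI Wm_carrier eq_matI)
  fix i j assume i: "i < dim_row (1\<^sub>m 2 :: real mat)" and j: "j < dim_col (1\<^sub>m 2 :: real mat)"
  have "i = 0 \<or> i = 1" "j = 0 \<or> j = 1" using i j by auto
  then show "(transpose_mat Wm * Wm) $$ (i, j) = (1\<^sub>m 2 :: real mat) $$ (i, j)"
    using Wm_carrier
    by (auto simp: Wm_cols dot3 Wc1_def Wc2_def)
qed (use Wm_carrier in auto)

lemma Wm_val: "minNormVar 2 Sg Wm > 36/50"
proof -
  have c: "Wc1 \<in> carrier_vec 3" "Wc2 \<in> carrier_vec 3" by (simp_all add: Wc1_def Wc2_def)
  have e: "Wc1$0 = 40/41" "Wc1$1 = 9/41" "Wc1$2 = 0" "Wc2$0 = 0" "Wc2$1 = 0" "Wc2$2 = 1"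
    by (simp_all add: Wc1_def Wc2_def)
  have n1: "normVar Wm S1 = (Wc1 \<bullet> (S1 *\<^sub>v Wc1) + Wc2 \<bullet> (S1 *\<^sub>v Wc2)) / 50"
    using nv2[OF Wm_carrier S1_carrier] by (simp only: Wm_cols tr1)
  have n2: "normVar Wm S2 = (Wc1 \<bullet> (S2 *\<^sub>v Wc1) + Wc2 \<bullet> (S2 *\<^sub>v Wc2)) / 50"
    using nv2[OF Wm_carrier S2_carrier] by (simp only: Wm_cols tr2)
  have "normVar Wm S1 > 36/50" unfolding n1 quad1[OF c(1)] quad1[OF c(2)] e by (simp add: power2_eq_square)
  moreover have "normVar Wm S2 > 36/50" unfolding n2 quad2[OF c(1)] quad2[OF c(2)] e by (simp add: power2_eq_square)
  ultimately show ?thesis unfolding minNV2 by simp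
qed

lemma psd1: "sym_psd 3 S1"
  unfolding sym_psd_def
proof (intro conjI S1_carrier ballI eq_matI)
  fix x :: "real vec" assume x: "x \<in> carrier_vec 3"
  have "20*(x$0)^2 + 10*(x$0)*(x$1) + 14*(x$1)^2 + 16*(x$2)^2
      = 20*(x$0 + x$1/4)^2 + 51/4*(x$1)^2 + 16*(x$2)^2"
    by (simp add: power2_eq_square algebra_simps)
  also have "\<dots> \<ge> 0" by simp
  finally show "0 \<le> x \<bullet> (S1 *\<^sub>v x)" using quad1[OF x] by simp
next
  fix i j assume i: "i < dim_row S1" and j: "j < dim_col S1"
  have "i = 0 \<or> i = 1 \<or> i = 2" "j = 0 \<or> j = 1 \<or> j = 2" using i j by (auto simp: S1_def)
  then show "transpose_mat S1 $$ (i, j) = S1 $$ (i, j)" by (auto simp: S1_def)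
qed (auto simp: S1_def)

lemma psd2: "sym_psd 3 S2"
  unfolding sym_psd_def
proof (intro conjI S2_carrier ballI eq_matI)
  fix x :: "real vec" assume x: "x \<in> carrier_vec 3"
  have "20*(x$0)^2 - 10*(x$0)*(x$1) + 11*(x$1)^2 + 19*(x$2)^2
      = 20*(x$0 - x$1/4)^2 + 39/4*(x$1)^2 + 19*(x$2)^2"
    by (simp add: power2_eq_square algebra_simps)
  also have "\<dots> \<ge> 0" by simp
  finally show "0 \<le> x \<bullet> (S2 *\<^sub>v x)" using quad2[OF x] by simp
next
  fix i j assume i: "i < dim_row S2" and j: "j < dim_col S2"
  have "i = 0 \<or> i = 1 \<or> i = 2" "j = 0 \<or> j = 1 \<or> j = 2" using i j by (auto simp: S2_def)
  then show "transpose_mat S2 $$ (i, j) = S2 $$ (i, j)" by (auto simp: S2_def)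
qed (auto simp: S2_def)

lemma seq_not_opt:
  assumes seq: "seq_solution 3 2 2 Sg V"
  shows "minNormVar 2 Sg V \<le> 36/50"
proof -
  have V: "V \<in> carrier_mat 3 2" and st: "\<forall>j<2. seq_feasible 3 V j (col V j) \<and>
        (\<forall>v. seq_feasible 3 V j v \<longrightarrow>
           minNormVar 2 Sg (mat_of_cols 3 (map (col V) [0..<j] @ [v]))
             \<le> minNormVar 2 Sg (mat_of_cols 3 (map (col V) [0..<Suc j])))"
    using seq unfolding seq_solution_def by auto
  define v where "v = col V 0"
  define w where "w = col V 1"
  have dr: "dim_row V = 3" using V by simp
  have vc: "v \<in> carrier_vec 3" and wc: "w \<in> carrier_vec 3"
    unfolding v_def w_def using col_dim[of V] dr by simp_all
  have st0: "seq_feasible 3 V 0 (col V 0) \<and>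
        (\<forall>u. seq_feasible 3 V 0 u \<longrightarrow>
           minNormVar 2 Sg (mat_of_cols 3 (map (col V) [0..<0] @ [u]))
             \<le> minNormVar 2 Sg (mat_of_cols 3 (map (col V) [0..<Suc 0])))"
    using st[rule_format, of 0] by simp
  have f0: "seq_feasible 3 V 0 v" using st0 by (simp add: v_def)
  have m0: "\<And>u. seq_feasible 3 V 0 u \<Longrightarrow>
      minNormVar 2 Sg (mat_of_cols 3 [u]) \<le> minNormVar 2 Sg (mat_of_cols 3 [v])"
    using st0 by (simp add: v_def)
  have "(1::nat) < 2" by simp
  then have f1: "seq_feasible 3 V 1 w" using st unfolding w_def by blast
  have uc: "unit_vec 3 0 \<in> carrier_vec (3::nat)" by simp
  have ue: "unit_vec 3 0 $ 0 = (1::real)" "unit_vec 3 0 $ 1 = (0::real)" "unit_vec 3 0 $ 2 = (0::real)"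
    by simp_all
  have "seq_feasible 3 V 0 (unit_vec 3 0)"
    unfolding seq_feasible_def using uc by (simp only: dot3[OF uc uc] ue) simp
  then have "minNormVar 2 Sg (mat_of_cols 3 [unit_vec 3 0]) \<le> minNormVar 2 Sg (mat_of_cols 3 [v])"
    by (rule m0)
  moreover have L: "minNormVar 2 Sg (mat_of_cols 3 [unit_vec 3 0]) = 2/5"
    unfolding minNV2 nv1[OF uc S1_carrier] nv1[OF uc S2_carrier] tr1 tr2 quad1[OF uc] quad2[OF uc] ue
    by simp
  moreover have R: "minNormVar 2 Sg (mat_of_cols 3 [v]) =
     min ((20*(v$0)^2 + 10*(v$0)*(v$1) + 14*(v$1)^2 + 16*(v$2)^2)/50)
     ((20*(v$0)^2 - 10*(v$0)*(v$1) + 11*(v$1)^2 + 19*(v$2)^2)/50)"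
    unfolding minNV2 nv1[OF vc S1_carrier] nv1[OF vc S2_carrier] tr1 tr2 quad1[OF vc] quad2[OF vc]
    by (rule refl)
  ultimately have q: "20 \<le> 20*(v$0)^2 + 10*(v$0)*(v$1) + 14*(v$1)^2 + 16*(v$2)^2"
      "20 \<le> 20*(v$0)^2 - 10*(v$0)*(v$1) + 11*(v$1)^2 + 19*(v$2)^2"
    by simp_all
  have "v \<bullet> v = 1" using f0 unfolding seq_feasible_def by simp
  then have vn: "(v$0)^2 + (v$1)^2 + (v$2)^2 = 1"
    unfolding dot3[OF vc vc] by (simp add: power2_eq_square)
  have "(v$1)^2 \<ge> 0" "(v$2)^2 \<ge> 0" by simp_all
  with q vn have "(v$1)^2 = 0 \<and> (v$2)^2 = 0" by linarith
  then have v12: "v$1 = 0" "v$2 = 0" by auto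
  with vn have a2: "(v$0)^2 = 1" by simp
  then have a0: "v$0 \<noteq> 0" by auto
  have "w \<bullet> w = 1" and wv: "w \<bullet> v = 0"
    using f1 unfolding seq_feasible_def by (auto simp: v_def)
  then have wn: "(w$0)^2 + (w$1)^2 + (w$2)^2 = 1"
    unfolding dot3[OF wc wc] by (simp add: power2_eq_square)
  from wv have "w$0 * v$0 = 0" unfolding dot3[OF wc vc] v12 by simp
  with a0 have w0: "w$0 = 0" by simp
  have "minNormVar 2 Sg V \<le> normVar V S1" unfolding minNV2 by simp
  also have "\<dots> = (v \<bullet> (S1 *\<^sub>v v) + w \<bullet> (S1 *\<^sub>v w)) / 50"
    using nv2[OF V S1_carrier] unfolding tr1 v_def w_def by simp
  also have "\<dots> = (20*(v$0)^2 + 14*(w$1)^2 + 16*(w$2)^2)/50"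
    unfolding quad1[OF vc] quad1[OF wc] v12 w0 by simp
  also have "\<dots> \<le> 36/50"
  proof -
    have "(w$1)^2 \<ge> 0" "(w$0)^2 = 0" using w0 by simp_all
    with a2 wn w0 have "20*(v$0)^2 + 14*(w$1)^2 + 16*(w$2)^2 \<le> 36" by linarith
    then show ?thesis by simp
  qed
  finally show ?thesis .
qed

theorem mainTheorem5:
  shows "\<exists>p k E (Sig :: nat \<Rightarrow> real mat).
           1 \<le> k \<and> k \<le> p \<and> 1 \<le> E \<and>
           (\<forall>e \<in> {1..E}. sym_psd p (Sig e) \<and> 0 < mtrace (Sig e)) \<and>
           (\<forall>V. seq_solution p k E Sig V \<longrightarrow> \<not> normMinPCA_sol p k E Sig V)"
proof -
  have A: "\<forall>e\<in>{1..2}. sym_psd 3 (Sg e) \<and> 0 < mtrace (Sg e)"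
    by (auto simp: Sg_def psd1 psd2 tr1 tr2)
  have B: "\<forall>V. seq_solution 3 2 2 Sg V \<longrightarrow> \<not> normMinPCA_sol 3 2 2 Sg V"
  proof (intro allI impI notI)
    fix V assume seq: "seq_solution 3 2 2 Sg V" and opt: "normMinPCA_sol 3 2 2 Sg V"
    have "minNormVar 2 Sg Wm \<le> minNormVar 2 Sg V"
      using opt Wm_stiefel unfolding normMinPCA_sol_def by blast
    with seq_not_opt[OF seq] Wm_val show False by linarith
  qed
  show ?thesis
    by (rule exI[of _ 3], rule exI[of _ 2], rule exI[of _ 2], rule exI[of _ Sg]) (use A B in auto)
qed

end
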